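(* Let $(t_1,s_1),(t_2,s_2)\in\mathbb{C}^\times\times\mathbb{C}^\times$ with $t_1\ne t_2$ and $s_1\neq s_2$, let $X_1=A_2(t_1,s_1)$, $X_2=A_2(t_2,s_2)$, and let $\mathfrak{M}_2^2(2)$ be the subgroup of invertible $2\times2$ complex matrices generated by $X_1,X_2$. Then for every $A\in\mathfrak{M}_2^2(2)$, either $A^{-1}=A$, or $A^{-1}=r_AI_2-A$ for some $r_A\in\mathbb{C}$.
   Context: $\mathbb{C}^\times=\mathbb{C}\setminus\{0\}$; $A_2(t,s)=\begin{pmatrix} t & s\\ \frac{1-t^2}{s} & -t\end{pmatrix}$; $I_2$ is the $2\times2$ identity matrix. *)

theory Defs
  imports "HOL-Analysis.Analysis"
begin

definition A2 :: "complex \<Rightarrow> complex \<Rightarrow> complex^2^2" where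
  "A2 t s = (\<chi> i j. if i = 1 then (if j = 1 then t else s)
                     else (if j = 1 then (1 - t^2) / s else - t))"

inductive_set gen_subgroup :: "('a::field^'n^'n) set \<Rightarrow> ('a^'n^'n) set"
  for G :: "('a::field^'n^'n) set" where
  gen_one: "mat 1 \<in> gen_subgroup G"
| gen_gen: "g \<in> G \<Longrightarrow> g \<in> gen_subgroup G"
| gen_mult: "a \<in> gen_subgroup G \<Longrightarrow> b \<in> gen_subgroup G \<Longrightarrow> a ** b \<in> gen_subgroup G"
| gen_inv: "a \<in> gen_subgroup G \<Longrightarrow> matrix_inv a \<in> gen_subgroup G"

end

theory Submission imports Defs begin

primrec mpow :: "'a::field^'n^'n \<Rightarrow> nat \<Rightarrow> 'a^'n^'n" where
  "mpow A 0 = mat 1"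
| "mpow A (Suc n) = A ** mpow A n"

lemma mpow_Suc': "mpow A (Suc n) = mpow A n ** A"
  by (induction n) (simp_all add: matrix_mul_assoc)

definition P :: "'a::field^'n^'n \<Rightarrow> 'a^'n^'n \<Rightarrow> int \<Rightarrow> 'a^'n^'n" where
  "P R R' k = (if 0 \<le> k then mpow R (nat k) else mpow R' (nat (-k)))"

lemma P_R:
  assumes "R' ** R = mat 1"
  shows "P R R' k ** R = P R R' (k+1)"
proof (cases "0 \<le> k")
  case True
  then show ?thesis unfolding P_def by (simp add: mpow_Suc'[symmetric] nat_add_distrib)
next
  case False
  then obtain j where j: "nat (-k) = Suc j" by (metis gr0_implies_Suc zero_less_nat_eq neg_0_less_iff_less not_le)
  have "mpow R' (Suc j) ** R = mpow R' j" by (simp only: mpow_Suc') (simp add: matrix_mul_assoc[symmetric] assms)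
  moreover have "nat (-(k+1)) = j" using j by linarith
  moreover have "\<not> 0 \<le> k+1 \<or> j = 0" using j False by linarith
  ultimately show ?thesis using False j unfolding P_def by auto
qed

lemma P_R':
  assumes "R ** R' = mat 1"
  shows "P R R' k ** R' = P R R' (k-1)"
proof (cases "0 < k")
  case True
  then obtain j where j: "nat k = Suc j" by (metis gr0_implies_Suc zero_less_nat_eq)
  have "mpow R (Suc j) ** R' = mpow R j" by (simp only: mpow_Suc') (simp add: matrix_mul_assoc[symmetric] assms)
  moreover have "nat (k-1) = j" using j by linarith
  ultimately show ?thesis using True j unfolding P_def by auto
next
  case False
  then have "nat (-(k-1)) = Suc (nat (-k))" by linarith
  then show ?thesis using False unfolding P_def by (simp add: mpow_Suc'[symmetric])
qed

lemma P_add: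
  assumes "R ** R' = mat 1" "R' ** R = mat 1"
  shows "P R R' m ** P R R' n = P R R' (m+n)"
proof (induction n rule: int_induct[where k=0])
  case base then show ?case by (simp add: P_def)
next
  case (step1 i)
  have "P R R' m ** P R R' (i+1) = P R R' m ** (P R R' i ** R)" using P_R[OF assms(2)] by simp
  also have "\<dots> = P R R' (m+i) ** R" by (simp add: matrix_mul_assoc step1(2))
  also have "\<dots> = P R R' (m+(i+1))" using P_R[OF assms(2)] by (simp add: add.assoc)
  finally show ?case .
next
  case (step2 i)
  have "P R R' m ** P R R' (i-1) = P R R' m ** (P R R' i ** R')" using P_R'[OF assms(1)] by simp
  also have "\<dots> = P R R' (m+i) ** R'" by (simp add: matrix_mul_assoc step2(2))
  also have "\<dots> = P R R' (m+(i-1))" using P_R'[OF assms(1)] by (simp add: algebra_simps)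
  finally show ?case .
qed

lemma P_swap:
  assumes "X ** R = R' ** X" "X ** R' = R ** X"
  shows "X ** P R R' k = P R R' (-k) ** X"
proof -
  have a: "X ** mpow R n = mpow R' n ** X" for n
  proof (induction n)
    case (Suc n)
    have "X ** mpow R (Suc n) = (X ** R) ** mpow R n" by (simp add: matrix_mul_assoc)
    also have "\<dots> = R' ** (X ** mpow R n)" by (simp add: assms matrix_mul_assoc)
    finally show ?case by (simp add: Suc matrix_mul_assoc)
  qed simp
  have b: "X ** mpow R' n = mpow R n ** X" for n
  proof (induction n)
    case (Suc n)
    have "X ** mpow R' (Suc n) = (X ** R') ** mpow R' n" by (simp add: matrix_mul_assoc)
    also have "\<dots> = R ** (X ** mpow R' n)" by (simp add: assms matrix_mul_assoc)
    finally show ?case by (simp add: Suc matrix_mul_assoc)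
  qed simp
  show ?thesis unfolding P_def using a b by auto
qed

lemma inv_unique:
  fixes A B :: "'a::field^'n^'n"
  assumes "A ** B = mat 1" "B ** A = mat 1"
  shows "matrix_inv A = B"
proof -
  have ex: "A ** matrix_inv A = mat 1 \<and> matrix_inv A ** A = mat 1"
    unfolding matrix_inv_def by (rule someI[of _ B]) (use assms in auto)
  have "matrix_inv A = (B ** A) ** matrix_inv A" using assms by (simp add: matrix_mul_lid)
  also have "\<dots> = B" using ex by (simp add: matrix_mul_assoc[symmetric] matrix_mul_rid)
  finally show ?thesis .
qed

lemma X_sq:
  assumes "s \<noteq> 0"
  shows "A2 t s ** A2 t s = mat 1"
  using assms unfolding A2_def
  by (auto simp: vec_eq_iff matrix_matrix_mult_def sum_2 forall_2 mat_def field_simps power2_eq_square)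

lemma inv_det1:
  fixes A :: "complex^2^2"
  assumes "det A = 1"
  shows "matrix_inv A = mat (A$1$1 + A$2$2) - A"
  apply (rule inv_unique)
  using assms
  by (auto simp: vec_eq_iff matrix_matrix_mult_def sum_2 forall_2 mat_def det_2 algebra_simps)

lemma det_X: assumes "s \<noteq> 0" shows "det (A2 t s) = -1"
  using assms unfolding A2_def by (simp add: det_2 field_simps power2_eq_square)
lemma det_mpow: fixes R :: "complex^2^2" assumes "det R = 1" shows "det (mpow R n) = 1"
  by (induction n) (simp_all add: det_mul assms)

theorem mainTheorem12:
  fixes t1 s1 t2 s2 :: complex
  assumes "t1 \<noteq> 0" "s1 \<noteq> 0" "t2 \<noteq> 0" "s2 \<noteq> 0"
    and "t1 \<noteq> t2" "s1 \<noteq> s2"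
    and "A \<in> gen_subgroup {A2 t1 s1, A2 t2 s2}"
  shows "matrix_inv A = A \<or> (\<exists>r::complex. matrix_inv A = mat r - A)"
proof -
  define X1 where "X1 = A2 t1 s1"
  define X2 where "X2 = A2 t2 s2"
  define R where "R = X1 ** X2"
  define R' where "R' = X2 ** X1"
  have X1sq: "X1 ** X1 = mat 1" unfolding X1_def using X_sq assms(2) .
  have X2sq: "X2 ** X2 = mat 1" unfolding X2_def using X_sq assms(4) .
  have RR': "R ** R' = mat 1" unfolding R_def R'_def
    by (simp add: matrix_mul_assoc[symmetric]) (simp add: matrix_mul_assoc X2sq X1sq)
  have R'R: "R' ** R = mat 1" unfolding R_def R'_def
    by (simp add: matrix_mul_assoc[symmetric]) (simp add: matrix_mul_assoc X2sq X1sq)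
  have s1: "X1 ** R = R' ** X1" unfolding R_def R'_def
    by (simp add: matrix_mul_assoc[symmetric] X1sq) (simp add: matrix_mul_assoc X1sq)
  have s2: "X1 ** R' = R ** X1" unfolding R_def R'_def
    by (simp add: matrix_mul_assoc)
  let ?P = "P R R'"
  have sw: "X1 ** ?P k = ?P (-k) ** X1" for k using P_swap[OF s1 s2] .
  have add: "?P m ** ?P n = ?P (m+n)" for m n using P_add[OF RR' R'R] .
  have P0: "?P 0 = mat 1" by (simp add: P_def)
  have Pm1: "?P (-1) = R'" by (simp add: P_def)
  have W: "\<exists>k. B = ?P k \<or> B = ?P k ** X1" if "B \<in> gen_subgroup {X1, X2}" for B
    using that
  proof (induction B rule: gen_subgroup.induct)
    case gen_one then show ?case using P0 by metis
  next
    case (gen_gen g)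
    have "X2 = R' ** X1" unfolding R'_def
      by (simp add: matrix_mul_assoc[symmetric] X1sq)
    then have "X2 = ?P (-1) ** X1" using Pm1 by simp
    moreover have "X1 = ?P 0 ** X1" by (simp add: P0)
    ultimately show ?case using gen_gen by auto
  next
    case (gen_mult a b)
    then obtain m n where m: "a = ?P m \<or> a = ?P m ** X1" and n: "b = ?P n \<or> b = ?P n ** X1" by blast
    have c1: "?P m ** ?P n = ?P (m+n)" by (rule add)
    have c2: "?P m ** (?P n ** X1) = ?P (m+n) ** X1" by (simp add: matrix_mul_assoc add)
    have c3: "(?P m ** X1) ** ?P n = ?P (m - n) ** X1"
      by (simp add: matrix_mul_assoc[symmetric] sw) (simp add: matrix_mul_assoc add)
    have c4: "(?P m ** X1) ** (?P n ** X1) = ?P (m - n)"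
    proof -
      have "(?P m ** X1) ** (?P n ** X1) = ?P m ** (X1 ** ?P n) ** X1"
        by (simp add: matrix_mul_assoc)
      also have "\<dots> = ?P (m - n) ** (X1 ** X1)"
        by (simp add: sw matrix_mul_assoc add)
      finally show ?thesis by (simp add: X1sq)
    qed
    from m n c1 c2 c3 c4 show ?case by metis
  next
    case (gen_inv a)
    then obtain m where m: "a = ?P m \<or> a = ?P m ** X1" by blast
    have i1: "matrix_inv (?P m) = ?P (-m)"
      by (rule inv_unique) (simp_all add: add P0)
    have sq: "(?P m ** X1) ** (?P m ** X1) = mat 1"
    proof -
      have "(?P m ** X1) ** (?P m ** X1) = ?P m ** (X1 ** ?P m) ** X1"
        by (simp add: matrix_mul_assoc)
      also have "\<dots> = ?P (m - m) ** (X1 ** X1)"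
        by (simp add: sw matrix_mul_assoc add)
      finally show ?thesis by (simp add: X1sq P0)
    qed
    have i2: "matrix_inv (?P m ** X1) = ?P m ** X1"
      by (rule inv_unique) (use sq in auto)
    from m i1 i2 show ?case by metis
  qed
  obtain k where k: "A = ?P k \<or> A = ?P k ** X1"
    using W assms(7) unfolding X1_def X2_def by blast
  show ?thesis
  proof (cases "A = ?P k ** X1")
    case True
    have sq: "(?P k ** X1) ** (?P k ** X1) = mat 1"
    proof -
      have "(?P k ** X1) ** (?P k ** X1) = ?P k ** (X1 ** ?P k) ** X1"
        by (simp add: matrix_mul_assoc)
      also have "\<dots> = ?P (k - k) ** (X1 ** X1)"
        by (simp add: sw matrix_mul_assoc add)
      finally show ?thesis by (simp add: X1sq P0)
    qed
    have "matrix_inv A = A" unfolding True by (rule inv_unique) (use sq in auto)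
    then show ?thesis by simp
  next
    case False
    then have A: "A = ?P k" using k by blast
    have dR: "det R = 1" unfolding R_def X1_def X2_def
      using det_X assms(2,4) by (simp add: det_mul)
    have dR': "det R' = 1" unfolding R'_def X1_def X2_def
      using det_X assms(2,4) by (simp add: det_mul)
    have "det A = 1" unfolding A P_def using det_mpow dR dR' by auto
    then show ?thesis using inv_det1 by blast
  qed
qed

end
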